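(* With $\mathcal{L}^\ddagger$ as defined below, set $\Gamma_T=\frac{\gamma_++\gamma_-}{2}+2\gamma_z$, $\Gamma_L=\gamma_++\gamma_-$ and $\delta=\gamma_+-\gamma_-$. Then $e^{t\mathcal{L}^\ddagger}$ is a unital Schwarz map for every $t\ge0$ if and only if $$\Gamma_L\ge|\delta|\quad\text{and}\quad \tfrac12(\Gamma_L-|\delta|)+2\Gamma_T-\Gamma_L\ge 0 .$$
   Context: For $\omega,\gamma_+,\gamma_-,\gamma_z\in\mathbb{R}$, $\mathcal{L}^\ddagger:\mathcal{M}_2\to\mathcal{M}_2$ is $\mathcal{L}^\ddagger(X)=\tfrac{i\omega}{2}[\sigma_z,X]+\gamma_+(\sigma_-X\sigma_+-\tfrac12\{\sigma_-\sigma_+,X\})+\gamma_-(\sigma_+X\sigma_--\tfrac12\{\sigma_+\sigma_-,X\})+\gamma_z(\sigma_zX\sigma_z-X)$, where $\sigma_x,\sigma_y,\sigma_z$ are the Pauli matrices and $\sigma_\pm=\frac12(\sigma_x\pm i\sigma_y)$. $\Gamma_T$ (transversal) and $\Gamma_L$ (longitudinal) are the relaxation rates: the Schrödinger-picture generator $\mathcal{L}$ satisfies $\mathcal{L}(\sigma_\pm)=(\mp i\omega-\Gamma_T)\sigma_\pm$, $\mathcal{L}(\sigma_z)=-\Gamma_L\sigma_z$. A unital Schwarz map on $\mathcal{M}_n$ is a linear map $\Phi$ with $\Phi(\mathbb{1})=\mathbb{1}$ and $\Phi(X^\dagger X)\ge\Phi(X)^\dagger\Phi(X)$ for all $X$.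 *)

theory Defs
  imports "HOL-Analysis.Analysis"
begin

type_synonym cmat2 = "complex^2^2"

definition mat2 :: "complex \<Rightarrow> complex \<Rightarrow> complex \<Rightarrow> complex \<Rightarrow> cmat2" where
  "mat2 a b c d = (\<chi> i j. if i = 0 then (if j = 0 then a else b) else (if j = 0 then c else d))"

definition cscale :: "complex \<Rightarrow> cmat2 \<Rightarrow> cmat2" where
  "cscale c A = (\<chi> i j. c * A $ i $ j)"

definition adj :: "cmat2 \<Rightarrow> cmat2" where
  "adj A = (\<chi> i j. cnj (A $ j $ i))"

definition sigma_x :: cmat2 where "sigma_x = mat2 0 1 1 0"
definition sigma_y :: cmat2 where "sigma_y = mat2 0 (- \<i>) \<i> 0"
definition sigma_z :: cmat2 where "sigma_z = mat2 1 0 0 (-1)"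
definition sigma_plus :: cmat2 where "sigma_plus = cscale (1/2) (sigma_x + cscale \<i> sigma_y)"
definition sigma_minus :: cmat2 where "sigma_minus = cscale (1/2) (sigma_x - cscale \<i> sigma_y)"

definition commutator :: "cmat2 \<Rightarrow> cmat2 \<Rightarrow> cmat2" where
  "commutator A B = A ** B - B ** A"
definition anticommutator :: "cmat2 \<Rightarrow> cmat2 \<Rightarrow> cmat2" where
  "anticommutator A B = A ** B + B ** A"

definition Ldag :: "real \<Rightarrow> real \<Rightarrow> real \<Rightarrow> real \<Rightarrow> cmat2 \<Rightarrow> cmat2" where
  "Ldag \<omega> gp gm gz X =
     cscale (\<i> * complex_of_real \<omega> / 2) (commutator sigma_z X)
   + cscale (complex_of_real gp)
       (sigma_minus ** X ** sigma_plus - cscale (1/2) (anticommutator (sigma_minus ** sigma_plus) X))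
   + cscale (complex_of_real gm)
       (sigma_plus ** X ** sigma_minus - cscale (1/2) (anticommutator (sigma_plus ** sigma_minus) X))
   + cscale (complex_of_real gz) (sigma_z ** X ** sigma_z - X)"

definition expL :: "real \<Rightarrow> (cmat2 \<Rightarrow> cmat2) \<Rightarrow> cmat2 \<Rightarrow> cmat2" where
  "expL t L X = (\<Sum>n. (t ^ n / fact n) *\<^sub>R (L ^^ n) X)"

definition psd :: "cmat2 \<Rightarrow> bool" where
  "psd A \<longleftrightarrow> (\<forall>v :: complex^2. let q = (\<Sum>i\<in>UNIV. cnj (v $ i) * (A *v v) $ i)
                                  in Im q = 0 \<and> Re q \<ge> 0)"

definition unital_schwarz :: "(cmat2 \<Rightarrow> cmat2) \<Rightarrow> bool" where
  "unital_schwarz \<Phi> \<longleftrightarrow>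
     (\<forall>X Y. \<Phi> (X + Y) = \<Phi> X + \<Phi> Y) \<and> (\<forall>c X. \<Phi> (cscale c X) = cscale c (\<Phi> X)) \<and>
     \<Phi> (mat 1) = mat 1 \<and>
     (\<forall>X. psd (\<Phi> (adj X ** X) - adj (\<Phi> X) ** \<Phi> X))"

end

theory Submission
  imports Defs
begin

lemma two_cases: "(i::2) = 0 \<or> i = 1"
  using exhaust_2[of i] by auto

lemma all2: "(\<forall>i::2. P i) = (P 0 \<and> P 1)"
proof -
  { fix i :: 2 assume "P 0" "P 1" then have "P i" using two_cases[of i] by auto }
  then show ?thesis by auto
qed

lemma UNIV2': "(UNIV::2 set) = {0,1}"
  using two_cases by auto

lemma sum2: "(\<Sum>i\<in>(UNIV::2 set). f i) = f 0 + f 1"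
  by (simp add: UNIV2')

lemma mat2_nth: "mat2 a b c d $ i $ j = (if i = 0 then (if j=0 then a else b) else (if j=0 then c else d))"
  by (simp add: mat2_def)

lemma cmat2_eq_iff: "(A::cmat2) = B \<longleftrightarrow> A$0$0 = B$0$0 \<and> A$0$1 = B$0$1 \<and> A$1$0=B$1$0 \<and> A$1$1 = B$1$1"
  by (simp add: vec_eq_iff all2)

lemma mat2_eta: "(A::cmat2) = mat2 (A$0$0) (A$0$1) (A$1$0) (A$1$1)"
  by (simp add: cmat2_eq_iff mat2_nth)

lemma mat2_eq: "mat2 a b c d = mat2 a' b' c' d' \<longleftrightarrow> a=a' \<and> b=b' \<and> c=c' \<and> d=d'"
  by (simp add: cmat2_eq_iff mat2_nth)

lemma mat2_mult: "mat2 a b c d ** mat2 e f g h = mat2 (a*e+b*g) (a*f+b*h) (c*e+d*g) (c*f+d*h)"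
  by (simp add: cmat2_eq_iff mat2_nth matrix_matrix_mult_def sum2)

lemma mat2_add: "mat2 a b c d + mat2 e f g h = mat2 (a+e) (b+f) (c+g) (d+h)"
  by (simp add: cmat2_eq_iff mat2_nth)

lemma mat2_diff: "mat2 a b c d - mat2 e f g h = mat2 (a-e) (b-f) (c-g) (d-h)"
  by (simp add: cmat2_eq_iff mat2_nth)

lemma mat2_cscale: "cscale k (mat2 a b c d) = mat2 (k*a) (k*b) (k*c) (k*d)"
  by (simp add: cmat2_eq_iff mat2_nth cscale_def)

lemma mat2_scaleR: "r *\<^sub>R (mat2 a b c d) = mat2 (r*\<^sub>Ra) (r*\<^sub>Rb) (r*\<^sub>Rc) (r*\<^sub>Rd)"
  by (simp add: cmat2_eq_iff mat2_nth)

lemma mat2_adj: "adj (mat2 a b c d) = mat2 (cnj a) (cnj c) (cnj b) (cnj d)"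
  by (simp add: cmat2_eq_iff mat2_nth adj_def)

lemma mat2_one: "mat 1 = mat2 1 0 0 1"
  by (simp add: cmat2_eq_iff mat2_nth mat_def)

lemma mat2_zero: "0 = mat2 0 0 0 0"
  by (simp add: cmat2_eq_iff mat2_nth)

lemmas mat2_simps = mat2_mult mat2_add mat2_diff mat2_cscale mat2_scaleR mat2_adj

lemma sigmas: "sigma_z = mat2 1 0 0 (-1)" "sigma_plus = mat2 0 1 0 0" "sigma_minus = mat2 0 0 1 0"
  by (auto simp: sigma_z_def sigma_plus_def sigma_minus_def sigma_x_def sigma_y_def mat2_simps mat2_eq)

lemma Ldag_mat2: "Ldag \<omega> gp gm gz (mat2 a b c d) =
   mat2 (of_real gm * (d - a)) ((\<i> * of_real \<omega> - of_real ((gp+gm)/2 + 2*gz)) * b)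
        ((- \<i> * of_real \<omega> - of_real ((gp+gm)/2 + 2*gz)) * c) (of_real gp * (a - d))"
  by (simp add: Ldag_def sigmas commutator_def anticommutator_def mat2_simps mat2_eq; simp add: algebra_simps)


definition mu :: "real \<Rightarrow> real \<Rightarrow> real \<Rightarrow> real \<Rightarrow> complex" where
  "mu \<omega> gp gm gz = \<i> * of_real \<omega> - of_real ((gp+gm)/2 + 2*gz)"

lemma Ldag_mat2': "Ldag \<omega> gp gm gz (mat2 a b c d) =
   mat2 (of_real gm * (d - a)) (mu \<omega> gp gm gz * b) (cnj (mu \<omega> gp gm gz) * c) (of_real gp * (a - d))"
  unfolding Ldag_mat2 mu_def by (simp add: mat2_eq)

lemma Ldag_pow: "(Ldag \<omega> gp gm gz ^^ n) (mat2 a b c d) =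
   mat2 (if n = 0 then a else of_real (gm * (-(gp+gm))^(n-1)) * (d - a))
        (mu \<omega> gp gm gz ^ n * b) (cnj (mu \<omega> gp gm gz) ^ n * c)
        (if n = 0 then d else of_real (gp * (-(gp+gm))^(n-1)) * (a - d))"
proof (induction n)
  case 0
  then show ?case by simp
next
  case (Suc n)
  show ?case
  proof (cases n)
    case 0
    then show ?thesis by (simp add: Ldag_mat2')
  next
    case (Suc m)
    then show ?thesis using Suc.IH
      by (simp add: Ldag_mat2' mat2_eq; simp add: algebra_simps)
  qed
qed

lemma mat2_sum: "(\<Sum>i<(n::nat). mat2 (w i) (x i) (y i) (z i)) = mat2 (\<Sum>i<n. w i) (\<Sum>i<n. x i) (\<Sum>i<n. y i) (\<Sum>i<n. z i)"
  by (induction n) (simp_all add: mat2_zero[symmetric] mat2_add)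

lemma mat2_tendsto:
  assumes "(W \<longlongrightarrow> W0) F" "(X \<longlongrightarrow> X0) F" "(Y \<longlongrightarrow> Y0) F" "(Z \<longlongrightarrow> Z0) F"
  shows "((\<lambda>n. mat2 (W n) (X n) (Y n) (Z n)) \<longlongrightarrow> mat2 W0 X0 Y0 Z0) F"
  unfolding mat2_def
  by (intro tendsto_vec_lambda) (auto simp: assms)

lemma mat2_sums:
  assumes "w sums W" "x sums X" "y sums Y" "z sums Z"
  shows "(\<lambda>n. mat2 (w n) (x n) (y n) (z n)) sums mat2 W X Y Z"
  using assms unfolding sums_def mat2_sum by (intro mat2_tendsto)

lemma fser: "(\<lambda>n. (t::real)^(Suc n) / fact (Suc n) * (-G::real)^n) sums (if G = 0 then t else (1 - exp(-G*t))/G)"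
proof (cases "G = 0")
  case True
  have "(\<lambda>n. if n = 0 then t else 0) sums t"
    using sums_single[of 0 "\<lambda>_. t"] by simp
  moreover have "(\<lambda>n. t^(Suc n) / fact (Suc n) * (-G)^n) = (\<lambda>n. if n = 0 then t else 0)"
    using True by (auto simp: fun_eq_iff power_0_left)
  ultimately show ?thesis using True by simp
next
  case False
  have e: "(\<lambda>n. (-G*t)^n /\<^sub>R fact n) sums exp (-G*t)" by (rule exp_converges)
  then have "(\<lambda>n. (-G*t)^(Suc n) /\<^sub>R fact (Suc n)) sums (exp (-G*t) - 1)"
    by (subst sums_Suc_iff) simp
  then have s1: "(\<lambda>n. (-G*t)^(Suc n) /\<^sub>R fact (Suc n) * (-1/G)) sums ((exp (-G*t) - 1) * (-1/G))"
    by (rule sums_mult2)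
  have eq1: "(\<lambda>n. (-G*t)^(Suc n) /\<^sub>R fact (Suc n) * (-1/G)) = (\<lambda>n. t^(Suc n) / fact (Suc n) * (-G)^n)"
  proof
    fix n
    have "(-G*t)^(Suc n) = (-G)^n * (-G) * t^(Suc n)"
      by (simp only: power_mult_distrib power_Suc2 mult_ac)
    show "(-G*t)^(Suc n) /\<^sub>R fact (Suc n) * (-1/G) = t^(Suc n) / fact (Suc n) * (-G)^n"
    proof -
      have k: "\<And>p q r. inverse r * (p*(-G)*q)*(-1/G) = q/r*p"
        using False by (simp add: field_simps)
      show ?thesis using \<open>(-G*t)^(Suc n) = _\<close> k by (simp only: real_scaleR_def)
    qed
  qed
  have eq2: "(exp (-G*t) - 1) * (-1/G) = (1 - exp(-G*t))/G"
    using False by (simp add: field_simps)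
  show ?thesis using s1 False unfolding eq1 eq2 by simp
qed


definition fT :: "real \<Rightarrow> real \<Rightarrow> real" where
  "fT G t = (if G = 0 then t else (1 - exp(-G*t))/G)"

lemma ser_diag: fixes a w :: complex shows "(\<lambda>n. (t^n/fact n) *\<^sub>R (if n = 0 then a else of_real (g*(-G)^(n-1))*w)) sums (a + of_real (g * fT G t) * w)"
proof -
  have "(\<lambda>n. of_real (t^(Suc n) / fact (Suc n) * (-G)^n) :: complex) sums of_real (fT G t)"
    using sums_of_real[OF fser[of t G]] unfolding fT_def .
  then have "(\<lambda>n. of_real (t^(Suc n) / fact (Suc n) * (-G)^n) * (of_real g * w) :: complex) sums (of_real (fT G t) * (of_real g * w))"
    by (rule sums_mult2)
  moreover have "(\<lambda>n. of_real (t^(Suc n) / fact (Suc n) * (-G)^n) * (of_real g * w) :: complex) =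
     (\<lambda>n. (t^(Suc n)/fact (Suc n)) *\<^sub>R (if Suc n = 0 then a else of_real (g*(-G)^(Suc n-1))*w))"
    by (simp add: fun_eq_iff scaleR_conv_of_real mult_ac)
  ultimately have "(\<lambda>n. (t^(Suc n)/fact (Suc n)) *\<^sub>R (if Suc n = 0 then a else of_real (g*(-G)^(Suc n-1))*w)) sums (of_real (fT G t) * (of_real g * w))"
    by simp
  then have "(\<lambda>n. (t^n/fact n) *\<^sub>R (if n = 0 then a else of_real (g*(-G)^(n-1))*w)) sums (of_real (fT G t) * (of_real g * w) + a)"
    by (subst (asm) sums_Suc_iff) simp
  then show ?thesis by (simp add: algebra_simps)
qed

lemma ser_exp: fixes m b :: complex shows "(\<lambda>n. (t^n/fact n) *\<^sub>R (m^n * b)) sums (exp(of_real t * m) * b)"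
proof -
  have "(\<lambda>n. (of_real t * m)^n /\<^sub>R fact n * b) sums (exp(of_real t * m) * b)"
    by (rule sums_mult2[OF exp_converges])
  moreover have "(\<lambda>n. (of_real t * m)^n /\<^sub>R fact n * b) = (\<lambda>n. (t^n/fact n) *\<^sub>R (m^n * b))"
  proof
    fix n
    have "(of_real t * m)^n = of_real t ^ n * m ^ n" by (rule power_mult_distrib)
    then show "(of_real t * m)^n /\<^sub>R fact n * b = (t^n/fact n) *\<^sub>R (m^n * b)"
      by (simp add: scaleR_conv_of_real divide_inverse mult_ac)
  qed
  ultimately show ?thesis by simp
qed

definition Phi :: "real \<Rightarrow> real \<Rightarrow> real \<Rightarrow> real \<Rightarrow> real \<Rightarrow> cmat2 \<Rightarrow> cmat2" where
  "Phi \<omega> gp gm gz t X = mat2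
     (X$0$0 + of_real (gm * fT (gp+gm) t) * (X$1$1 - X$0$0))
     (exp (of_real t * mu \<omega> gp gm gz) * X$0$1)
     (exp (of_real t * cnj (mu \<omega> gp gm gz)) * X$1$0)
     (X$1$1 + of_real (gp * fT (gp+gm) t) * (X$0$0 - X$1$1))"

lemma Phi_mat2: "Phi \<omega> gp gm gz t (mat2 a b c d) = mat2
     (a + of_real (gm * fT (gp+gm) t) * (d - a))
     (exp (of_real t * mu \<omega> gp gm gz) * b)
     (exp (of_real t * cnj (mu \<omega> gp gm gz)) * c)
     (d + of_real (gp * fT (gp+gm) t) * (a - d))"
  unfolding Phi_def mat2_nth by simp

lemma expL_eq: "expL t (Ldag \<omega> gp gm gz) X = Phi \<omega> gp gm gz t X"
proof -
  obtain a b c d where X: "X = mat2 a b c d" by (rule that[OF mat2_eta])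
  have "(\<lambda>n. (t ^ n / fact n) *\<^sub>R (Ldag \<omega> gp gm gz ^^ n) X) sums Phi \<omega> gp gm gz t X"
    unfolding X Ldag_pow mat2_scaleR Phi_mat2
    by (intro mat2_sums ser_diag ser_exp)
  then show ?thesis unfolding expL_def by (rule sums_unique[symmetric])
qed

lemma key_ident:
  fixes a b d B C Z :: real
  shows "(a*(1-a)*Z^2 + (1-a-(1-a-d))*C^2 + a*B^2) * (b*(1-b)*Z^2 + (1-b-(1-a-d))*B^2 + b*C^2) - (1-a-d)*(a*B*Z + b*C*Z)^2
   = a*b*((1-a)*Z^2-B*C)^2 + (a-b)*(a*b*(1-a)*Z^4 + a*b*Z^2*B^2 + (1-a)*b*Z^2*C^2 + a*B^4)
     + d*((a*((1-a)*Z^2+B^2))*B^2 + (b*(1-b)*Z^2+(a-b)*B^2+b*C^2)*C^2) + d*d*B^2*C^2 + d*(a*B+b*C)^2*Z^2"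
  by algebra

lemma key:
  fixes a b l B C Z :: real
  assumes "0 \<le> b" "b \<le> a" "0 \<le> l" "l \<le> 1 - a"
  shows "l*(a*B*Z + b*C*Z)^2 \<le> (a*(1-a)*Z^2 + (1-a-l)*C^2 + a*B^2) * (b*(1-b)*Z^2 + (1-b-l)*B^2 + b*C^2)"
proof -
  define d where "d = 1 - a - l"
  have l: "l = 1 - a - d" by (simp add: d_def)
  have d0: "d \<ge> 0" "1 - a \<ge> 0" "a \<ge> 0" "a - b \<ge> 0" "1 - b \<ge> 0" using assms by (auto simp: d_def)
  have "0 \<le> a*b*((1-a)*Z^2-B*C)^2 + (a-b)*(a*b*(1-a)*Z^4 + a*b*Z^2*B^2 + (1-a)*b*Z^2*C^2 + a*B^4)
     + d*((a*((1-a)*Z^2+B^2))*B^2 + (b*(1-b)*Z^2+(a-b)*B^2+b*C^2)*C^2) + d*d*B^2*C^2 + d*(a*B+b*C)^2*Z^2"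
    using d0 assms by (intro add_nonneg_nonneg mult_nonneg_nonneg) (auto simp: zero_le_even_power)
  then show ?thesis unfolding l using key_ident[of a Z d C B b] by linarith
qed

lemma amgm2:
  fixes P R k x y :: real
  assumes "P \<ge> 0" "R \<ge> 0" "k \<ge> 0" "k^2 \<le> P*R" "x \<ge> 0" "y \<ge> 0"
  shows "2*k*x*y \<le> P*x^2 + R*y^2"
proof -
  have "k \<le> sqrt P * sqrt R"
    using assms by (metis real_le_rsqrt real_sqrt_mult)
  moreover have "0 \<le> (sqrt P * x - sqrt R * y)^2" by simp
  then have "2 * (sqrt P * sqrt R) * x * y \<le> P*x^2 + R*y^2"
    using assms by (simp add: power2_eq_square algebra_simps)
  ultimately show ?thesis
    using mult_right_mono[of k "sqrt P * sqrt R" "x*y"] assms by (simp add: mult_ac)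
qed
definition PhiG :: "real \<Rightarrow> real \<Rightarrow> complex \<Rightarrow> cmat2 \<Rightarrow> cmat2" where
  "PhiG \<alpha> \<beta> l X = mat2
     (X$0$0 + of_real \<alpha> * (X$1$1 - X$0$0))
     (l * X$0$1) (cnj l * X$1$0)
     (X$1$1 + of_real \<beta> * (X$0$0 - X$1$1))"

lemma PhiG_mat2: "PhiG \<alpha> \<beta> l (mat2 a b c d) = mat2 (a + of_real \<alpha> * (d - a)) (l * b) (cnj l * c) (d + of_real \<beta> * (a - d))"
  unfolding PhiG_def mat2_nth by simp

lemma Phi_PhiG: "Phi \<omega> gp gm gz t = PhiG (gm * fT (gp+gm) t) (gp * fT (gp+gm) t) (exp (of_real t * mu \<omega> gp gm gz))"
  by (rule ext) (simp add: Phi_def PhiG_def exp_cnj)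

lemma M_entries: "PhiG \<alpha> \<beta> l (adj (mat2 a b c d) ** mat2 a b c d) - adj (PhiG \<alpha> \<beta> l (mat2 a b c d)) ** PhiG \<alpha> \<beta> l (mat2 a b c d)
  = mat2 (of_real \<alpha> * (1 - of_real \<alpha>) * (cnj (a-d) * (a-d)) + (1 - of_real \<alpha> - cnj l * l) * (cnj c * c) + of_real \<alpha> * (cnj b * b))
         (l * (of_real \<alpha> * cnj (a-d) * b - of_real \<beta> * cnj c * (a-d)))
         (cnj (l * (of_real \<alpha> * cnj (a-d) * b - of_real \<beta> * cnj c * (a-d))))
         (of_real \<beta> * (1 - of_real \<beta>) * (cnj (a-d) * (a-d)) + (1 - of_real \<beta> - cnj l * l) * (cnj b * b) + of_real \<beta> * (cnj c * c))"
  unfolding PhiG_mat2 mat2_simps mat2_eq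
  by (simp add: algebra_simps)


lemma cnjsq: "cnj z * z = of_real ((cmod z)^2)"
  by (metis complex_norm_square mult.commute)

lemma M_real: "PhiG \<alpha> \<beta> l (adj (mat2 a b c d) ** mat2 a b c d) - adj (PhiG \<alpha> \<beta> l (mat2 a b c d)) ** PhiG \<alpha> \<beta> l (mat2 a b c d)
  = mat2 (of_real (\<alpha> * (1 - \<alpha>) * (cmod (a-d))^2 + (1 - \<alpha> - (cmod l)^2) * (cmod c)^2 + \<alpha> * (cmod b)^2))
         (l * (of_real \<alpha> * cnj (a-d) * b - of_real \<beta> * cnj c * (a-d)))
         (cnj (l * (of_real \<alpha> * cnj (a-d) * b - of_real \<beta> * cnj c * (a-d))))
         (of_real (\<beta> * (1 - \<beta>) * (cmod (a-d))^2 + (1 - \<beta> - (cmod l)^2) * (cmod b)^2 + \<beta> * (cmod c)^2))"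
  unfolding M_entries cnjsq by simp

lemma psd_herm:
  assumes P: "P \<ge> 0" and R: "R \<ge> 0" and Q: "(cmod Q)^2 \<le> P*R"
  shows "psd (mat2 (of_real P) Q (cnj Q) (of_real R))"
  unfolding psd_def Let_def
proof
  fix v :: "complex^2"
  define v1 where "v1 = v$0"
  define v2 where "v2 = v$1"
  define w where "w = cnj v1 * Q * v2"
  have q: "(\<Sum>i\<in>UNIV. cnj (v $ i) * (mat2 (of_real P) Q (cnj Q) (of_real R) *v v) $ i)
     = of_real P * (cnj v1 * v1) + of_real R * (cnj v2 * v2) + (w + cnj w)"
    by (simp add: sum2 matrix_vector_mult_def mat2_nth v1_def v2_def w_def algebra_simps)
  also have "\<dots> = of_real (P * (cmod v1)^2 + R * (cmod v2)^2 + 2 * Re w)"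
    by (simp add: cnjsq complex_add_cnj)
  finally have q2: "(\<Sum>i\<in>UNIV. cnj (v $ i) * (mat2 (of_real P) Q (cnj Q) (of_real R) *v v) $ i) = of_real (P * (cmod v1)^2 + R * (cmod v2)^2 + 2 * Re w)" .
  have "- Re w \<le> cmod w" using abs_Re_le_cmod[of w] by linarith
  also have "cmod w = cmod Q * cmod v1 * cmod v2" by (simp add: w_def norm_mult)
  finally have "2 * (-Re w) \<le> 2 * cmod Q * cmod v1 * cmod v2" by linarith
  also have "\<dots> \<le> P * (cmod v1)^2 + R * (cmod v2)^2"
    by (rule amgm2) (use P R Q in auto)
  finally show "Im (\<Sum>i\<in>UNIV. cnj (v $ i) * (mat2 (of_real P) Q (cnj Q) (of_real R) *v v) $ i) = 0 \<and>
      0 \<le> Re (\<Sum>i\<in>UNIV. cnj (v $ i) * (mat2 (of_real P) Q (cnj Q) (of_real R) *v v) $ i)"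
    unfolding q2 by simp
qed

lemma psd_diag:
  assumes "psd M"
  shows "Re (M$0$0) \<ge> 0" "Re (M$1$1) \<ge> 0"
proof -
  define e0 :: "complex^2" where "e0 = (\<chi> i. if i = 0 then 1 else 0)"
  define e1 :: "complex^2" where "e1 = (\<chi> i. if i = 0 then 0 else 1)"
  have "(\<Sum>i\<in>UNIV. cnj (e0 $ i) * (M *v e0) $ i) = M$0$0"
    by (simp add: sum2 matrix_vector_mult_def e0_def)
  then show "Re (M$0$0) \<ge> 0" using assms unfolding psd_def Let_def by metis
  have "(\<Sum>i\<in>UNIV. cnj (e1 $ i) * (M *v e1) $ i) = M$1$1"
    by (simp add: sum2 matrix_vector_mult_def e1_def)
  then show "Re (M$1$1) \<ge> 0" using assms unfolding psd_def Let_def by metis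
qed

lemma cscale_nth: "cscale c X $ i $ j = c * X$i$j"
  by (simp add: cscale_def)

lemma cmod_cnj_diff: "cmod (cnj a - cnj d) = cmod (a - d)"
  by (metis complex_cnj_diff complex_mod_cnj)

lemma PhiG_schwarz:
  assumes a0: "\<alpha> \<ge> 0" and b0: "\<beta> \<ge> 0" and la: "(cmod l)^2 \<le> 1 - \<alpha>" and lb: "(cmod l)^2 \<le> 1 - \<beta>"
  shows "unital_schwarz (PhiG \<alpha> \<beta> l)"
  unfolding unital_schwarz_def
proof (intro conjI allI)
  fix X Y show "PhiG \<alpha> \<beta> l (X + Y) = PhiG \<alpha> \<beta> l X + PhiG \<alpha> \<beta> l Y"
    by (simp add: PhiG_def mat2_add mat2_eq algebra_simps)
next
  fix c X show "PhiG \<alpha> \<beta> l (cscale c X) = cscale c (PhiG \<alpha> \<beta> l X)"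
    by (simp add: PhiG_def mat2_cscale mat2_eq cscale_nth algebra_simps)
next
  show "PhiG \<alpha> \<beta> l (mat 1) = mat 1"
    by (simp add: mat2_one PhiG_mat2)
next
  fix X
  obtain a b c d where X: "X = mat2 a b c d" by (rule that[OF mat2_eta])
  define L where "L = (cmod l)^2"
  define B where "B = cmod b"
  define C where "C = cmod c"
  define Z where "Z = cmod (a - d)"
  have L0: "L \<ge> 0" by (simp add: L_def)
  have a1: "\<alpha> \<le> 1" "\<beta> \<le> 1" using la lb zero_le_power2[of "cmod l"] by linarith+
  define P where "P = \<alpha> * (1 - \<alpha>) * Z^2 + (1 - \<alpha> - L) * C^2 + \<alpha> * B^2"
  define R where "R = \<beta> * (1 - \<beta>) * Z^2 + (1 - \<beta> - L) * B^2 + \<beta> * C^2"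
  define Q where "Q = l * (of_real \<alpha> * cnj (a-d) * b - of_real \<beta> * cnj c * (a-d))"
  have la': "1 - \<alpha> - L \<ge> 0" "1 - \<beta> - L \<ge> 0" using la lb by (auto simp: L_def)
  have P0: "P \<ge> 0" unfolding P_def using a0 a1 la'
    by (intro add_nonneg_nonneg mult_nonneg_nonneg) auto
  have R0: "R \<ge> 0" unfolding R_def using b0 a1 la'
    by (intro add_nonneg_nonneg mult_nonneg_nonneg) auto
  have "cmod Q \<le> cmod l * (\<alpha> * Z * B + \<beta> * C * Z)"
  proof -
    have "cmod (of_real \<alpha> * cnj (a-d) * b - of_real \<beta> * cnj c * (a-d)) \<le>
          cmod (of_real \<alpha> * cnj (a-d) * b) + cmod (of_real \<beta> * cnj c * (a-d))"
      by (rule norm_triangle_ineq4)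
    also have "\<dots> = \<alpha> * Z * B + \<beta> * C * Z"
      using a0 b0 by (simp add: norm_mult Z_def B_def C_def cmod_cnj_diff)
    finally show ?thesis unfolding Q_def norm_mult
      by (simp add: mult_left_mono)
  qed
  then have "(cmod Q)^2 \<le> (cmod l * (\<alpha> * Z * B + \<beta> * C * Z))^2"
    by (simp add: power_mono)
  also have "\<dots> = L * (\<alpha> * B * Z + \<beta> * C * Z)^2"
    by (simp add: L_def power_mult_distrib mult_ac)
  also have "\<dots> \<le> P * R"
  proof (cases "\<beta> \<le> \<alpha>")
    case True
    show ?thesis unfolding P_def R_def
      by (rule key) (use True b0 L0 la in \<open>auto simp: L_def\<close>)
  next
    case False
    have "L * (\<beta> * C * Z + \<alpha> * B * Z)^2 \<le> R * P" unfolding P_def R_def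
      by (rule key) (use False a0 L0 lb in \<open>auto simp: L_def\<close>)
    then show ?thesis by (simp add: add.commute mult.commute)
  qed
  finally have QPR: "(cmod Q)^2 \<le> P * R" .
  show "psd (PhiG \<alpha> \<beta> l (adj X ** X) - adj (PhiG \<alpha> \<beta> l X) ** PhiG \<alpha> \<beta> l X)"
    unfolding X M_real
    using psd_herm[OF P0 R0 QPR] unfolding P_def R_def Q_def L_def Z_def B_def C_def .
qed

lemma PhiG_nec:
  assumes "unital_schwarz (PhiG \<alpha> \<beta> l)"
  shows "\<alpha> * (1 - \<alpha>) \<ge> 0" "\<beta> * (1 - \<beta>) \<ge> 0" "1 - \<alpha> - (cmod l)^2 \<ge> 0" "1 - \<beta> - (cmod l)^2 \<ge> 0"
proof -
  have ps: "psd (PhiG \<alpha> \<beta> l (adj (mat2 a b c d) ** mat2 a b c d) - adj (PhiG \<alpha> \<beta> l (mat2 a b c d)) ** PhiG \<alpha> \<beta> l (mat2 a b c d))" for a b c d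
    using assms unfolding unital_schwarz_def by blast
  have d1: "Re ((PhiG \<alpha> \<beta> l (adj (mat2 a b c d) ** mat2 a b c d) - adj (PhiG \<alpha> \<beta> l (mat2 a b c d)) ** PhiG \<alpha> \<beta> l (mat2 a b c d)) $0$0) \<ge> 0" for a b c d
    by (rule psd_diag(1)[OF ps])
  have d2: "Re ((PhiG \<alpha> \<beta> l (adj (mat2 a b c d) ** mat2 a b c d) - adj (PhiG \<alpha> \<beta> l (mat2 a b c d)) ** PhiG \<alpha> \<beta> l (mat2 a b c d)) $1$1) \<ge> 0" for a b c d
    by (rule psd_diag(2)[OF ps])
  show "\<alpha> * (1 - \<alpha>) \<ge> 0" using d1[of 1 0 0 0] unfolding M_real mat2_nth by simp
  show "\<beta> * (1 - \<beta>) \<ge> 0" using d2[of 1 0 0 0] unfolding M_real mat2_nth by simp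
  show "1 - \<alpha> - (cmod l)^2 \<ge> 0" using d1[of 0 0 1 0] unfolding M_real mat2_nth by simp
  show "1 - \<beta> - (cmod l)^2 \<ge> 0" using d2[of 0 1 0 0] unfolding M_real mat2_nth by simp
qed

lemma ell: "(cmod (exp (of_real t * mu \<omega> gp gm gz)))^2 = exp (-(gp+gm+4*gz)*t)"
proof -
  have "(cmod (exp (of_real t * mu \<omega> gp gm gz)))^2 = exp (-((gp+gm)/2+2*gz)*t) * exp (-((gp+gm)/2+2*gz)*t)"
    by (simp add: mu_def power2_eq_square mult.commute)
  also have "\<dots> = exp (-(gp+gm+4*gz)*t)"
    by (simp add: exp_add[symmetric] algebra_simps)
  finally show ?thesis .
qed

lemma fT_pos:
  assumes t: "t > 0" shows "fT G t > 0"
proof (cases "G = 0")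
  case True then show ?thesis using t by (simp add: fT_def)
next
  case False
  show ?thesis
  proof (cases "G > 0")
    case True
    then have "exp (-G*t) < 1" using t by simp
    then show ?thesis using True by (simp add: fT_def)
  next
    case False2: False
    then have "G < 0" using False by simp
    then have "exp (-G*t) > 1" using t by (simp add: mult_neg_pos)
    then show ?thesis using \<open>G < 0\<close> by (simp add: fT_def divide_neg_neg)
  qed
qed

lemma fT_nonneg: "t \<ge> 0 \<Longrightarrow> fT G t \<ge> 0"
  using fT_pos[of t G] by (cases "t = 0") (auto simp: fT_def)

lemma suff_rate:
  assumes gp: "gp \<ge> 0" and gm: "gm \<ge> 0" and r: "gp + 4*gz \<ge> 0" and t: "t \<ge> 0"
  shows "exp (-(gp+gm+4*gz)*t) \<le> 1 - gm * fT (gp+gm) t"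
proof (cases "gp + gm = 0")
  case True
  then have "gp = 0" "gm = 0" using gp gm by auto
  then have "gz \<ge> 0" using r by simp
  then show ?thesis using True t \<open>gm = 0\<close> \<open>gp = 0\<close> by (simp add: mult_nonneg_nonneg)
next
  case False
  define G where "G = gp + gm"
  have G0: "G > 0" using False gp gm by (simp add: G_def)
  define r where "r = gm / G"
  have r01: "r \<ge> 0" "r \<le> 1" using gp gm G0 by (auto simp: r_def G_def field_simps)
  have "exp (-(gp+gm+4*gz)*t) \<le> exp (-gm*t)"
  proof -
    have "0 \<le> (gp + 4*gz) * t" using r t by simp
    then show ?thesis by (simp add: algebra_simps)
  qed
  also have "-gm*t = (1 - r) *\<^sub>R 0 + r *\<^sub>R (-G*t)"
    using G0 by (simp add: r_def)
  also have "exp \<dots> \<le> (1 - r) * exp 0 + r * exp (-G*t)"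
    by (rule convex_onD[OF exp_convex]) (use r01 in auto)
  also have "\<dots> = 1 - gm * fT (gp+gm) t"
  proof -
    have "fT (gp+gm) t = (1 - exp(-G*t))/G" using G0 by (simp add: fT_def G_def)
    show ?thesis unfolding \<open>fT (gp+gm) t = _\<close> using G0 by (simp add: r_def field_simps)
  qed
  finally show ?thesis .
qed

lemma nec_rate:
  assumes gp: "gp \<ge> 0" and gm: "gm \<ge> 0" and r: "gp + 4*gz < 0"
  shows "\<exists>t>0. 1 - gm * fT (gp+gm) t - exp (-(gp+gm+4*gz)*t) < 0"
proof (cases "gp + gm = 0")
  case True
  then have "gp = 0" "gm = 0" using gp gm by auto
  then have "gz < 0" using r by simp
  then have "exp (-(gp+gm+4*gz)*1) > 1" using \<open>gp = 0\<close> \<open>gm = 0\<close> by simp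
  then show ?thesis using \<open>gm = 0\<close> by (intro exI[of _ 1]) simp
next
  case False
  define G where "G = gp + gm"
  have G0: "G \<noteq> 0" using False by (simp add: G_def)
  define h where "h x = 1 - gm * ((1 - exp (-G*x))/G) - exp (-(G+4*gz)*x)" for x
  have "(h has_real_derivative (- gm * (G * exp (-G*0)) / G + (G+4*gz) * exp (-(G+4*gz)*0))) (at 0)"
    unfolding h_def by (auto intro!: derivative_eq_intros)
  then have D: "DERIV h 0 :> (gp + 4*gz)"
    using G0 by (simp add: G_def)
  obtain d where d: "d > 0" "\<forall>x>0. x < d \<longrightarrow> h 0 > h (0 + x)"
    using DERIV_neg_dec_right[OF D r] by blast
  have "h (d/2) < h 0" using d by auto
  moreover have "h 0 = 0" by (simp add: h_def)
  moreover have "h (d/2) = 1 - gm * fT (gp+gm) (d/2) - exp (-(gp+gm+4*gz)*(d/2))"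
    using G0 by (simp add: h_def fT_def G_def)
  ultimately show ?thesis using d by (intro exI[of _ "d/2"]) auto
qed

lemma rhs_equiv: "(gp + gm \<ge> \<bar>gp - gm\<bar> \<and> ((gp+gm) - \<bar>gp - gm\<bar>) / 2 + 2 * ((gp + gm) / 2 + 2 * gz) - (gp+gm) \<ge> 0) \<longleftrightarrow>
      ((gp::real) \<ge> 0 \<and> gm \<ge> 0 \<and> gp + 4*gz \<ge> 0 \<and> gm + 4*gz \<ge> 0)"
proof -
  have e: "((gp+gm) - \<bar>gp - gm\<bar>) / 2 + 2 * ((gp + gm) / 2 + 2 * gz) - (gp+gm) = min gp gm + 4*gz"
    by (simp add: min_def abs_if add_divide_distrib diff_divide_distrib)
  show ?thesis unfolding e by (auto simp: min_def abs_if)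
qed

theorem mainTheorem9:
  fixes \<omega> gp gm gz :: real
  defines "Gam_T \<equiv> (gp + gm) / 2 + 2 * gz"
    and "Gam_L \<equiv> gp + gm"
    and "\<delta> \<equiv> gp - gm"
  shows "(\<forall>t\<ge>0. unital_schwarz (expL t (Ldag \<omega> gp gm gz)))
         \<longleftrightarrow> (Gam_L \<ge> \<bar>\<delta>\<bar> \<and> (Gam_L - \<bar>\<delta>\<bar>) / 2 + 2 * Gam_T - Gam_L \<ge> 0)"
proof -
  have Phi_eq: "expL t (Ldag \<omega> gp gm gz) = PhiG (gm * fT (gp+gm) t) (gp * fT (gp+gm) t) (exp (of_real t * mu \<omega> gp gm gz))" for t
    using expL_eq[of t \<omega> gp gm gz] Phi_PhiG[of \<omega> gp gm gz t] by (intro ext) simp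
  have rhs: "(Gam_L \<ge> \<bar>\<delta>\<bar> \<and> (Gam_L - \<bar>\<delta>\<bar>) / 2 + 2 * Gam_T - Gam_L \<ge> 0) \<longleftrightarrow>
      (gp \<ge> 0 \<and> gm \<ge> 0 \<and> gp + 4*gz \<ge> 0 \<and> gm + 4*gz \<ge> 0)"
    unfolding Gam_T_def Gam_L_def \<delta>_def by (rule rhs_equiv)
  show ?thesis unfolding rhs Phi_eq
  proof
    assume H: "\<forall>t\<ge>0. unital_schwarz (PhiG (gm * fT (gp+gm) t) (gp * fT (gp+gm) t) (exp (of_real t * mu \<omega> gp gm gz)))"
    have N: "0 \<le> gm * fT (gp+gm) t * (1 - gm * fT (gp+gm) t)" "0 \<le> gp * fT (gp+gm) t * (1 - gp * fT (gp+gm) t)"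
       "0 \<le> 1 - gm * fT (gp+gm) t - exp (-(gp+gm+4*gz)*t)" "0 \<le> 1 - gp * fT (gp+gm) t - exp (-(gp+gm+4*gz)*t)"
      if "t \<ge> 0" for t
      using PhiG_nec[OF H[rule_format, OF that]] unfolding ell by auto
    have f1: "fT (gp+gm) 1 > 0" by (rule fT_pos) simp
    have gm0: "gm \<ge> 0"
    proof (rule ccontr)
      assume "\<not> gm \<ge> 0"
      then have "gm * fT (gp+gm) 1 < 0" using f1 by (simp add: mult_neg_pos)
      then have "gm * fT (gp+gm) 1 * (1 - gm * fT (gp+gm) 1) < 0" by (simp add: mult_neg_pos)
      then show False using N(1)[of 1] by simp
    qed
    have gp0: "gp \<ge> 0"
    proof (rule ccontr)
      assume "\<not> gp \<ge> 0"
      then have "gp * fT (gp+gm) 1 < 0" using f1 by (simp add: mult_neg_pos)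
      then have "gp * fT (gp+gm) 1 * (1 - gp * fT (gp+gm) 1) < 0" by (simp add: mult_neg_pos)
      then show False using N(2)[of 1] by simp
    qed
    have c1: "gp + 4*gz \<ge> 0"
    proof (rule ccontr)
      assume "\<not> gp + 4*gz \<ge> 0"
      then have "\<exists>t>0. 1 - gm * fT (gp+gm) t - exp (-(gp+gm+4*gz)*t) < 0"
        by (intro nec_rate gp0 gm0) simp
      then obtain t where "t > 0" "1 - gm * fT (gp+gm) t - exp (-(gp+gm+4*gz)*t) < 0"
        by blast
      then show False using N(3)[of t] by simp
    qed
    have c2: "gm + 4*gz \<ge> 0"
    proof (rule ccontr)
      assume "\<not> gm + 4*gz \<ge> 0"
      then have "\<exists>t>0. 1 - gp * fT (gm+gp) t - exp (-(gm+gp+4*gz)*t) < 0"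
        by (intro nec_rate gp0 gm0) simp
      then obtain t where "t > 0" "1 - gp * fT (gm+gp) t - exp (-(gm+gp+4*gz)*t) < 0"
        by blast
      then show False using N(4)[of t] by (simp add: add.commute)
    qed
    show "gp \<ge> 0 \<and> gm \<ge> 0 \<and> gp + 4*gz \<ge> 0 \<and> gm + 4*gz \<ge> 0" using gp0 gm0 c1 c2 by simp
  next
    assume C: "gp \<ge> 0 \<and> gm \<ge> 0 \<and> gp + 4*gz \<ge> 0 \<and> gm + 4*gz \<ge> 0"
    show "\<forall>t\<ge>0. unital_schwarz (PhiG (gm * fT (gp+gm) t) (gp * fT (gp+gm) t) (exp (of_real t * mu \<omega> gp gm gz)))"
    proof (intro allI impI)
      fix t :: real assume t: "t \<ge> 0"
      have f0: "fT (gp+gm) t \<ge> 0" using fT_nonneg[OF t] .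
      have s1: "exp (-(gp+gm+4*gz)*t) \<le> 1 - gm * fT (gp+gm) t"
        using suff_rate[of gp gm gz t] C t by simp
      have s2: "exp (-(gm+gp+4*gz)*t) \<le> 1 - gp * fT (gm+gp) t"
        using suff_rate[of gm gp gz t] C t by simp
      show "unital_schwarz (PhiG (gm * fT (gp+gm) t) (gp * fT (gp+gm) t) (exp (of_real t * mu \<omega> gp gm gz)))"
      proof (rule PhiG_schwarz)
        show "gm * fT (gp+gm) t \<ge> 0" using C f0 by simp
        show "gp * fT (gp+gm) t \<ge> 0" using C f0 by simp
        show "(cmod (exp (of_real t * mu \<omega> gp gm gz)))^2 \<le> 1 - gm * fT (gp+gm) t"
          unfolding ell using s1 .
        show "(cmod (exp (of_real t * mu \<omega> gp gm gz)))^2 \<le> 1 - gp * fT (gp+gm) t"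
          unfolding ell using s2 by (simp only: add.commute[of gm gp])
      qed
    qed
  qed
qed

end
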